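(* Assume: (i) there is $L_f>0$ with $\|f(w,t)-f(y,t)\|_2\le L_f\|w-y\|_2$ for all $w,y\in\mathbb{R}^{N_s}$, $t\in[0,T]$; (ii) $\Delta t<\sigma_{\min}(A_{LM})/(L_f\sigma_{\max}(B_{LM}))$; (iii) there is $P>0$ with $\|\bar A\,\bar r(w)\|_2\ge P\|\bar r(w)\|_2$ for all $w\in\mathcal{S}$. Let $x\in\mathbb{R}^{N_sN_t}$ satisfy $\bar r(x)=0$, and set $K_r:=\sigma_{\min}(A_{LM})-\Delta t L_f\sigma_{\max}(B_{LM})$. Then for every $w\in\mathcal{S}$, $$\max_{1\le n\le N_t}\|x^n-w^n\|_2\le\|x-w\|_2\le\frac{1}{PK_r}\|\bar A\,\bar r(w)\|_2.$$ In particular, for $\tilde x\in\arg\min_{w\in\mathcal{S}}\|\bar A\,\bar r(w)\|_2$, $$\max_{1\le n\le N_t}\|x^n-\tilde x^n\|_2\le\|x-\tilde x\|_2\le\frac{1}{PK_r}\min_{w\in\mathcal{S}}\|\bar A\,\bar r(w)\|_2.$$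
   Context: Let $f:\mathbb{R}^{N_s}\times[0,T]\to\mathbb{R}^{N_s}$ be the velocity of the ODE $\dot x=f(x,t)$, $x(0)=x^0\in\mathbb{R}^{N_s}$. Use a uniform time grid $t^n=n\Delta t$, $n=0,\dots,N_t$, $\Delta t=T/N_t$. A linear multistep scheme is given by integers $k(n)\le n$ and coefficients $\alpha_j^n,\beta_j^n\in\mathbb{R}$, $j=0,\dots,k(n)$, $n=1,\dots,N_t$, with $\alpha_0^n\neq0$. For $w=(w^1,\dots,w^{N_t})\in\mathbb{R}^{N_sN_t}$ (blocks $w^n\in\mathbb{R}^{N_s}$) set $w^0:=x^0$ and define the residual at step $n$ by $r^n(w)=\sum_{j=0}^{k(n)}\alpha_j^n w^{n-j}-\Delta t\sum_{j=0}^{k(n)}\beta_j^n f(w^{n-j},t^{n-j})$, and the space–time residual $\bar r(w)=(r^1(w),\dots,r^{N_t}(w))\in\mathbb{R}^{N_sN_t}$. Let $A_{LM},B_{LM}\in\mathbb{R}^{N_sN_t\times N_sN_t}$ be the block lower-triangular matrices (blocks of size $N_s\times N_s$) whose $(n,n-j)$ block is $\alpha_j^n I_{N_s}$, resp. $\beta_j^n I_{N_s}$, for $0\le j\le k(n)$ with $n-j\ge1$, and zero otherwise. $\sigma_{\max}(M)$, $\sigma_{\min}(M)$ denote the largest and smallest singular values of $M$; $\|\cdot\|_2$ is the Euclidean norm on $\mathbb{R}^{N_sN_t}$. The space–time trial subspace is the affine subspace $\mathcal{S}=\{(x^0,\dots,x^0)+\sum_{i=1}^{n_{st}}c_i\pi_i: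 c\in\mathbb{R}^{n_{st}}\}\subseteq\mathbb{R}^{N_sN_t}$ for given vectors $\pi_1,\dots,\pi_{n_{st}}\in\mathbb{R}^{N_sN_t}$; $\bar A\in\mathbb{R}^{\bar z\times N_sN_t}$ is a weighting matrix. *)

theory Defs
  imports "HOL-Analysis.Analysis"
begin

text \<open>Space vectors live in \<open>real^'s\<close> (so N_s = CARD('s)).  A space-time vector
  w = (w^1,...,w^{N_t}) is represented by a function \<open>nat \<Rightarrow> real^'s\<close>, of which
  only the blocks with index in {1..Nt} are meaningful.  An (N_s N_t)x(N_s N_t) matrix
  is represented by its N_s x N_s blocks \<open>M n m\<close>, n,m in {1..Nt}.\<close>

definition st_norm :: "nat \<Rightarrow> (nat \<Rightarrow> real^'s) \<Rightarrow> real" where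
  "st_norm Nt w = sqrt (\<Sum>n\<in>{1..Nt}. (norm (w n))\<^sup>2)"

definition st_vecs :: "nat \<Rightarrow> (nat \<Rightarrow> real^'s) set" where
  "st_vecs Nt = {w. \<forall>n. n \<notin> {1..Nt} \<longrightarrow> w n = 0}"

definition blk_apply :: "nat \<Rightarrow> (nat \<Rightarrow> nat \<Rightarrow> real^'s^'s) \<Rightarrow> (nat \<Rightarrow> real^'s) \<Rightarrow> (nat \<Rightarrow> real^'s)" where
  "blk_apply Nt M w = (\<lambda>n. if n \<in> {1..Nt} then (\<Sum>m\<in>{1..Nt}. M n m *v w m) else 0)"

definition sigma_max :: "nat \<Rightarrow> (nat \<Rightarrow> nat \<Rightarrow> real^'s^'s) \<Rightarrow> real" where
  "sigma_max Nt M = Sup {st_norm Nt (blk_apply Nt M v) | v. v \<in> st_vecs Nt \<and> st_norm Nt v = 1}"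

definition sigma_min :: "nat \<Rightarrow> (nat \<Rightarrow> nat \<Rightarrow> real^'s^'s) \<Rightarrow> real" where
  "sigma_min Nt M = Inf {st_norm Nt (blk_apply Nt M v) | v. v \<in> st_vecs Nt \<and> st_norm Nt v = 1}"

definition LM_matrix :: "(nat \<Rightarrow> nat) \<Rightarrow> (nat \<Rightarrow> nat \<Rightarrow> real) \<Rightarrow> nat \<Rightarrow> nat \<Rightarrow> real^'s^'s" where
  "LM_matrix k c n m = (if 1 \<le> m \<and> m \<le> n \<and> n - m \<le> k n then c n (n - m) *\<^sub>R mat 1 else 0)"

definition ext0 :: "'a \<Rightarrow> (nat \<Rightarrow> 'a) \<Rightarrow> nat \<Rightarrow> 'a" where
  "ext0 x0 w n = (if n = 0 then x0 else w n)"

definition LM_residual ::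
  "(real^'s \<Rightarrow> real \<Rightarrow> real^'s) \<Rightarrow> real \<Rightarrow> (nat \<Rightarrow> nat) \<Rightarrow> (nat \<Rightarrow> nat \<Rightarrow> real) \<Rightarrow>
   (nat \<Rightarrow> nat \<Rightarrow> real) \<Rightarrow> real^'s \<Rightarrow> (nat \<Rightarrow> real^'s) \<Rightarrow> nat \<Rightarrow> real^'s" where
  "LM_residual f dt k \<alpha> \<beta> x0 w n =
     (\<Sum>j\<in>{0..k n}. \<alpha> n j *\<^sub>R ext0 x0 w (n - j))
     - dt *\<^sub>R (\<Sum>j\<in>{0..k n}. \<beta> n j *\<^sub>R f (ext0 x0 w (n - j)) (real (n - j) * dt))"

definition st_residual ::
  "nat \<Rightarrow> (real^'s \<Rightarrow> real \<Rightarrow> real^'s) \<Rightarrow> real \<Rightarrow> (nat \<Rightarrow> nat) \<Rightarrow> (nat \<Rightarrow> nat \<Rightarrow> real) \<Rightarrow>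
   (nat \<Rightarrow> nat \<Rightarrow> real) \<Rightarrow> real^'s \<Rightarrow> (nat \<Rightarrow> real^'s) \<Rightarrow> nat \<Rightarrow> real^'s" where
  "st_residual Nt f dt k \<alpha> \<beta> x0 w =
     (\<lambda>n. if n \<in> {1..Nt} then LM_residual f dt k \<alpha> \<beta> x0 w n else 0)"

text \<open>Weighting matrix \<open>Abar\<close> (zbar x N_s N_t), given by its column blocks \<open>Abar n\<close>.\<close>
definition weight_apply :: "nat \<Rightarrow> (nat \<Rightarrow> real^'s^'z) \<Rightarrow> (nat \<Rightarrow> real^'s) \<Rightarrow> real^'z" where
  "weight_apply Nt Ab w = (\<Sum>n\<in>{1..Nt}. Ab n *v w n)"

definition trial_space :: "nat \<Rightarrow> real^'s \<Rightarrow> nat \<Rightarrow> (nat \<Rightarrow> nat \<Rightarrow> real^'s) \<Rightarrow> (nat \<Rightarrow> real^'s) set" where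
  "trial_space Nt x0 nst \<pi> = {w. w \<in> st_vecs Nt \<and>
     (\<exists>c::nat \<Rightarrow> real. \<forall>n\<in>{1..Nt}. w n = x0 + (\<Sum>i\<in>{1..nst}. c i *\<^sub>R \<pi> i n))}"

end

theory Submission
  imports Defs
begin



lemma st_norm_L2: "st_norm Nt w = L2_set (\<lambda>n. norm (w n)) {1..Nt}"
  by (simp add: st_norm_def L2_set_def)

lemma st_norm_nonneg: "0 \<le> st_norm Nt w"
  by (simp add: st_norm_L2)

lemma st_norm_cong: "(\<And>n. n \<in> {1..Nt} \<Longrightarrow> norm (a n) = norm (b n)) \<Longrightarrow> st_norm Nt a = st_norm Nt b"
  unfolding st_norm_L2 by (rule L2_set_cong) auto

lemma st_norm_add: "st_norm Nt (\<lambda>n. a n + b n) \<le> st_norm Nt a + st_norm Nt b"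
proof -
  have "st_norm Nt (\<lambda>n. a n + b n) \<le> L2_set (\<lambda>n. norm (a n) + norm (b n)) {1..Nt}"
    unfolding st_norm_L2 by (rule L2_set_mono) (auto intro: norm_triangle_ineq)
  also have "\<dots> \<le> st_norm Nt a + st_norm Nt b"
    unfolding st_norm_L2 by (rule L2_set_triangle_ineq)
  finally show ?thesis .
qed

lemma st_norm_diff: "st_norm Nt a - st_norm Nt b \<le> st_norm Nt (\<lambda>n. a n - b n)"
  using st_norm_add[of Nt "\<lambda>n. a n - b n" b] by simp

lemma st_norm_scale: "st_norm Nt (\<lambda>n. c *\<^sub>R a n) = \<bar>c\<bar> * st_norm Nt a"
  unfolding st_norm_L2 by (simp add: L2_set_right_distrib)

lemma member_le_st_norm: "n \<in> {1..Nt} \<Longrightarrow> norm (w n) \<le> st_norm Nt w"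
  unfolding st_norm_L2 by (rule member_le_L2_set) auto

lemma blk_scale: "blk_apply Nt M (\<lambda>n. c *\<^sub>R v n) = (\<lambda>n. c *\<^sub>R blk_apply Nt M v n)"
  by (auto simp: blk_apply_def fun_eq_iff matrix_vector_mult_scaleR scaleR_sum_right)

lemma blk_bound: "\<exists>C. \<forall>v. st_norm Nt (blk_apply Nt M v) \<le> C * st_norm Nt v"
proof -
  define C where "C = (\<Sum>n\<in>{1..Nt}. \<Sum>m\<in>{1..Nt}. onorm ((*v) (M n m)))"
  have "st_norm Nt (blk_apply Nt M v) \<le> C * st_norm Nt v" for v
  proof -
    have "st_norm Nt (blk_apply Nt M v) \<le> (\<Sum>n\<in>{1..Nt}. norm (blk_apply Nt M v n))"
      unfolding st_norm_L2 by (rule L2_set_le_sum) auto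
    also have "\<dots> \<le> (\<Sum>n\<in>{1..Nt}. \<Sum>m\<in>{1..Nt}. onorm ((*v) (M n m)) * st_norm Nt v)"
    proof (rule sum_mono)
      fix n assume n: "n \<in> {1..Nt}"
      have "norm (blk_apply Nt M v n) \<le> (\<Sum>m\<in>{1..Nt}. norm (M n m *v v m))"
        using n by (simp add: blk_apply_def norm_sum)
      also have "\<dots> \<le> (\<Sum>m\<in>{1..Nt}. onorm ((*v) (M n m)) * st_norm Nt v)"
      proof (rule sum_mono)
        fix m assume m: "m \<in> {1..Nt}"
        have "norm (M n m *v v m) \<le> onorm ((*v) (M n m)) * norm (v m)"
          by (rule onorm) simp
        also have "\<dots> \<le> onorm ((*v) (M n m)) * st_norm Nt v"
          by (rule mult_left_mono[OF member_le_st_norm[OF m]]) (simp add: onorm_pos_le)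
        finally show "norm (M n m *v v m) \<le> onorm ((*v) (M n m)) * st_norm Nt v" .
      qed
      finally show "norm (blk_apply Nt M v n) \<le> (\<Sum>m\<in>{1..Nt}. onorm ((*v) (M n m)) * st_norm Nt v)" .
    qed
    also have "\<dots> = C * st_norm Nt v"
      by (simp add: C_def sum_distrib_right)
    finally show ?thesis .
  qed
  then show ?thesis by blast
qed

lemma unit_exists:
  assumes "Nt \<ge> 1"
  shows "\<exists>v::nat \<Rightarrow> real^'s. v \<in> st_vecs Nt \<and> st_norm Nt v = 1"
proof -
  obtain i :: 's where True by auto
  define v :: "nat \<Rightarrow> real^'s" where "v = (\<lambda>n. if n = 1 then axis i 1 else 0)"
  have "v \<in> st_vecs Nt" using assms by (auto simp: st_vecs_def v_def)
  moreover have "(\<Sum>n\<in>{1..Nt}. (norm (v n))\<^sup>2) = (\<Sum>n\<in>{1..Nt}. if n = 1 then 1 else 0)"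
    by (rule sum.cong) (auto simp: v_def)
  then have "st_norm Nt v = 1" using assms by (simp add: st_norm_def)
  ultimately show ?thesis by blast
qed

lemma sigma_max_bound:
  assumes "v \<in> st_vecs Nt"
  shows "st_norm Nt (blk_apply Nt M v) \<le> sigma_max Nt M * st_norm Nt v"
proof -
  let ?X = "{st_norm Nt (blk_apply Nt M v) | v. v \<in> st_vecs Nt \<and> st_norm Nt v = 1}"
  obtain C where C: "\<And>v. st_norm Nt (blk_apply Nt M v) \<le> C * st_norm Nt v"
    using blk_bound by blast
  have bdd: "bdd_above ?X"
  proof (rule bdd_aboveI[of _ C])
    fix y assume "y \<in> ?X"
    then obtain w where "y = st_norm Nt (blk_apply Nt M w)" "st_norm Nt w = 1" by blast
    then show "y \<le> C" using C[of w] by simp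
  qed
  show ?thesis
  proof (cases "st_norm Nt v = 0")
    case True
    then show ?thesis using C[of v] st_norm_nonneg[of Nt "blk_apply Nt M v"] by simp
  next
    case False
    then have pos: "st_norm Nt v > 0" using st_norm_nonneg[of Nt v] by simp
    define u where "u = (\<lambda>n. (1 / st_norm Nt v) *\<^sub>R v n)"
    have "u \<in> st_vecs Nt" using assms by (auto simp: u_def st_vecs_def)
    moreover have "st_norm Nt u = 1" using pos by (simp add: u_def st_norm_scale)
    ultimately have "st_norm Nt (blk_apply Nt M u) \<in> ?X" by blast
    then have "st_norm Nt (blk_apply Nt M u) \<le> sigma_max Nt M"
      unfolding sigma_max_def by (rule cSup_upper[OF _ bdd])
    moreover have "st_norm Nt (blk_apply Nt M u) = st_norm Nt (blk_apply Nt M v) / st_norm Nt v"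
      using pos by (simp add: u_def blk_scale st_norm_scale)
    ultimately show ?thesis using pos by (simp add: divide_le_eq mult.commute)
  qed
qed

lemma sigma_max_nonneg:
  assumes "Nt \<ge> 1"
  shows "0 \<le> sigma_max Nt (M :: nat \<Rightarrow> nat \<Rightarrow> real^'s^'s)"
proof -
  obtain v :: "nat \<Rightarrow> real^'s" where v: "v \<in> st_vecs Nt" "st_norm Nt v = 1"
    using unit_exists[OF assms] by blast
  show ?thesis using sigma_max_bound[OF v(1), of M] v(2) st_norm_nonneg[of Nt "blk_apply Nt M v"] by simp
qed

lemma sigma_min_bound:
  assumes "v \<in> st_vecs Nt"
  shows "sigma_min Nt M * st_norm Nt v \<le> st_norm Nt (blk_apply Nt M v)"
proof -
  let ?X = "{st_norm Nt (blk_apply Nt M v) | v. v \<in> st_vecs Nt \<and> st_norm Nt v = 1}"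
  have bdd: "bdd_below ?X" by (rule bdd_belowI[of _ 0]) (auto simp: st_norm_nonneg)
  show ?thesis
  proof (cases "st_norm Nt v = 0")
    case True
    then show ?thesis using st_norm_nonneg[of Nt "blk_apply Nt M v"] by simp
  next
    case False
    then have pos: "st_norm Nt v > 0" using st_norm_nonneg[of Nt v] by simp
    define u where "u = (\<lambda>n. (1 / st_norm Nt v) *\<^sub>R v n)"
    have "u \<in> st_vecs Nt" using assms by (auto simp: u_def st_vecs_def)
    moreover have "st_norm Nt u = 1" using pos by (simp add: u_def st_norm_scale)
    ultimately have "st_norm Nt (blk_apply Nt M u) \<in> ?X" by blast
    then have "sigma_min Nt M \<le> st_norm Nt (blk_apply Nt M u)"
      unfolding sigma_min_def by (rule cInf_lower[OF _ bdd])
    moreover have "st_norm Nt (blk_apply Nt M u) = st_norm Nt (blk_apply Nt M v) / st_norm Nt v"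
      using pos by (simp add: u_def blk_scale st_norm_scale)
    ultimately show ?thesis using pos by (simp add: le_divide_eq)
  qed
qed

lemma blk_LM:
  assumes n: "n \<in> {1..Nt}" and kn: "k n \<le> n"
  shows "blk_apply Nt (LM_matrix k c) v n = (\<Sum>j\<in>{0..k n}. c n j *\<^sub>R (if n - j = 0 then 0 else v (n - j)))"
proof -
  have "blk_apply Nt (LM_matrix k c) v n =
        (\<Sum>m\<in>{1..Nt}. if m \<le> n \<and> n - m \<le> k n then c n (n - m) *\<^sub>R v m else 0)"
    using n by (auto simp: blk_apply_def LM_matrix_def scaleR_matrix_vector_assoc[symmetric] intro!: sum.cong)
  also have "\<dots> = (\<Sum>m\<in>{m\<in>{1..Nt}. m \<le> n \<and> n - m \<le> k n}. c n (n - m) *\<^sub>R v m)"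
    by (subst sum.inter_filter) (auto intro!: sum.cong)
  also have "\<dots> = (\<Sum>j\<in>{j\<in>{0..k n}. j < n}. c n j *\<^sub>R v (n - j))"
    by (rule sum.reindex_bij_witness[of _ "\<lambda>j. n - j" "\<lambda>m. n - m"]) (use n kn in auto)
  also have "\<dots> = (\<Sum>j\<in>{0..k n}. if j < n then c n j *\<^sub>R v (n - j) else 0)"
    by (subst sum.inter_filter) (auto intro!: sum.cong)
  also have "\<dots> = (\<Sum>j\<in>{0..k n}. c n j *\<^sub>R (if n - j = 0 then 0 else v (n - j)))"
    by (rule sum.cong) (use kn in auto)
  finally show ?thesis .
qed



definition lmc :: "(nat \<Rightarrow> nat) \<Rightarrow> (nat \<Rightarrow> nat \<Rightarrow> real) \<Rightarrow> nat \<Rightarrow> nat \<Rightarrow> real" where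
  "lmc k c n m = (if 1 \<le> m \<and> m \<le> n \<and> n - m \<le> k n then c n (n - m) else 0)"

lemma blk_LM_scalar:
  "n \<in> {1..Nt} \<Longrightarrow> blk_apply Nt (LM_matrix k c) v n = (\<Sum>m\<in>{1..Nt}. lmc k c n m *\<^sub>R v m)"
  by (auto simp: blk_apply_def LM_matrix_def lmc_def scaleR_matrix_vector_assoc[symmetric] intro!: sum.cong)

lemma norm_sq_vec: "(norm (w::real^'a))\<^sup>2 = (\<Sum>i\<in>UNIV. (w$i)\<^sup>2)"
  by (simp add: norm_vec_def L2_set_def sum_nonneg)

lemma st_norm_sq: "(st_norm Nt v)\<^sup>2 = (\<Sum>n\<in>{1..Nt}. (norm (v n))\<^sup>2)"
  by (simp add: st_norm_def sum_nonneg)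

lemma decomp:
  fixes v :: "nat \<Rightarrow> real^'a"
  assumes v: "v \<in> st_vecs Nt"
  obtains u :: "'a \<Rightarrow> nat \<Rightarrow> real^'b" where
    "\<And>i. u i \<in> st_vecs Nt"
    "(st_norm Nt v)\<^sup>2 = (\<Sum>i\<in>UNIV. (st_norm Nt (u i))\<^sup>2)"
    "(st_norm Nt (blk_apply Nt (LM_matrix k c) v))\<^sup>2
       = (\<Sum>i\<in>UNIV. (st_norm Nt (blk_apply Nt (LM_matrix k c) (u i)))\<^sup>2)"
proof -
  obtain j :: 'b where True by auto
  define e :: "real^'b" where "e = axis j 1"
  define u where "u = (\<lambda>i n. (v n $ i) *\<^sub>R e)"
  have "u i \<in> st_vecs Nt" for i using v by (auto simp: st_vecs_def u_def)
  moreover have "(st_norm Nt v)\<^sup>2 = (\<Sum>i\<in>UNIV. (st_norm Nt (u i))\<^sup>2)"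
  proof -
    have nu: "(norm (u i n))\<^sup>2 = (v n $ i)\<^sup>2" for i n by (simp add: u_def e_def)
    show ?thesis
      unfolding st_norm_sq nu by (simp add: norm_sq_vec) (rule sum.swap)
  qed
  moreover have "(st_norm Nt (blk_apply Nt (LM_matrix k c) v))\<^sup>2
       = (\<Sum>i\<in>UNIV. (st_norm Nt (blk_apply Nt (LM_matrix k c) (u i)))\<^sup>2)"
  proof -
    have b: "norm (blk_apply Nt (LM_matrix k c) (u i) n) = \<bar>blk_apply Nt (LM_matrix k c) v n $ i\<bar>"
      if n: "n \<in> {1..Nt}" for i n
    proof -
      have "blk_apply Nt (LM_matrix k c) (u i) n = (\<Sum>m\<in>{1..Nt}. lmc k c n m * v m $ i) *\<^sub>R e"
        using n by (simp add: blk_LM_scalar u_def scaleR_sum_left)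
      moreover have "blk_apply Nt (LM_matrix k c) v n $ i = (\<Sum>m\<in>{1..Nt}. lmc k c n m * v m $ i)"
        using n by (simp add: blk_LM_scalar sum_component)
      ultimately show ?thesis by (simp add: e_def)
    qed
    have "(\<Sum>i\<in>UNIV. (st_norm Nt (blk_apply Nt (LM_matrix k c) (u i)))\<^sup>2)
       = (\<Sum>i\<in>UNIV. \<Sum>n\<in>{1..Nt}. (blk_apply Nt (LM_matrix k c) v n $ i)\<^sup>2)"
      unfolding st_norm_sq by (intro sum.cong refl) (simp add: b)
    then show ?thesis
      unfolding st_norm_sq by (simp add: norm_sq_vec) (rule sum.swap)
  qed
  ultimately show ?thesis using that by blast
qed

lemma sigma_min_transfer:
  assumes Nt: "Nt \<ge> 1"
  shows "sigma_min Nt (LM_matrix k c :: nat \<Rightarrow> nat \<Rightarrow> real^'b^'b)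
       \<le> sigma_min Nt (LM_matrix k c :: nat \<Rightarrow> nat \<Rightarrow> real^'a^'a)"
proof -
  let ?s = "sigma_min Nt (LM_matrix k c :: nat \<Rightarrow> nat \<Rightarrow> real^'b^'b)"
  let ?X = "{st_norm Nt (blk_apply Nt (LM_matrix k c) v) | v :: nat \<Rightarrow> real^'a. v \<in> st_vecs Nt \<and> st_norm Nt v = 1}"
  have eq: "sigma_min Nt (LM_matrix k c :: nat \<Rightarrow> nat \<Rightarrow> real^'a^'a) = Inf ?X"
    by (simp add: sigma_min_def)
  obtain v0 :: "nat \<Rightarrow> real^'a" where "v0 \<in> st_vecs Nt" "st_norm Nt v0 = 1"
    using unit_exists[OF Nt] by blast
  then have ne: "?X \<noteq> {}" by blast
  have "?s \<le> Inf ?X"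
  proof (rule cInf_greatest[OF ne])
    fix y assume "y \<in> ?X"
    then obtain v :: "nat \<Rightarrow> real^'a" where v: "v \<in> st_vecs Nt" "st_norm Nt v = 1"
      and y: "y = st_norm Nt (blk_apply Nt (LM_matrix k c) v)" by blast
    have y0: "0 \<le> y" using y st_norm_nonneg by simp
    show "?s \<le> y"
    proof (cases "?s \<le> 0")
      case True then show ?thesis using y0 by linarith
    next
      case False
      obtain u :: "'a \<Rightarrow> nat \<Rightarrow> real^'b" where u: "\<And>i. u i \<in> st_vecs Nt"
        "(st_norm Nt v)\<^sup>2 = (\<Sum>i\<in>UNIV. (st_norm Nt (u i))\<^sup>2)"
        "(st_norm Nt (blk_apply Nt (LM_matrix k c) v))\<^sup>2
           = (\<Sum>i\<in>UNIV. (st_norm Nt (blk_apply Nt (LM_matrix k c) (u i)))\<^sup>2)"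
        using decomp[OF v(1)] by metis
      have "?s\<^sup>2 = ?s\<^sup>2 * (st_norm Nt v)\<^sup>2" using v by simp
      also have "\<dots> = (\<Sum>i\<in>UNIV. (?s * st_norm Nt (u i))\<^sup>2)"
        by (simp add: u(2) sum_distrib_left power_mult_distrib)
      also have "\<dots> \<le> (\<Sum>i\<in>UNIV. (st_norm Nt (blk_apply Nt (LM_matrix k c) (u i)))\<^sup>2)"
      proof (rule sum_mono)
        fix i
        show "(?s * st_norm Nt (u i))\<^sup>2 \<le> (st_norm Nt (blk_apply Nt (LM_matrix k c) (u i)))\<^sup>2"
          using sigma_min_bound[OF u(1)[of i], of "LM_matrix k c"] False st_norm_nonneg[of Nt "u i"]
          by (intro power_mono) auto
      qed
      also have "\<dots> = y\<^sup>2" using u(3) y by simp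
      finally show ?thesis using y0 by (rule power2_le_imp_le)
    qed
  qed
  then show ?thesis using eq by simp
qed

lemma sigma_max_transfer:
  assumes Nt: "Nt \<ge> 1"
  shows "sigma_max Nt (LM_matrix k c :: nat \<Rightarrow> nat \<Rightarrow> real^'a^'a)
       \<le> sigma_max Nt (LM_matrix k c :: nat \<Rightarrow> nat \<Rightarrow> real^'b^'b)"
proof -
  let ?s = "sigma_max Nt (LM_matrix k c :: nat \<Rightarrow> nat \<Rightarrow> real^'b^'b)"
  let ?X = "{st_norm Nt (blk_apply Nt (LM_matrix k c) v) | v :: nat \<Rightarrow> real^'a. v \<in> st_vecs Nt \<and> st_norm Nt v = 1}"
  have eq: "sigma_max Nt (LM_matrix k c :: nat \<Rightarrow> nat \<Rightarrow> real^'a^'a) = Sup ?X"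
    by (simp add: sigma_max_def)
  obtain v0 :: "nat \<Rightarrow> real^'a" where "v0 \<in> st_vecs Nt" "st_norm Nt v0 = 1"
    using unit_exists[OF Nt] by blast
  then have ne: "?X \<noteq> {}" by blast
  have s0: "0 \<le> ?s" by (rule sigma_max_nonneg[OF Nt])
  have "Sup ?X \<le> ?s"
  proof (rule cSup_least[OF ne])
    fix y assume "y \<in> ?X"
    then obtain v :: "nat \<Rightarrow> real^'a" where v: "v \<in> st_vecs Nt" "st_norm Nt v = 1"
      and y: "y = st_norm Nt (blk_apply Nt (LM_matrix k c) v)" by blast
    obtain u :: "'a \<Rightarrow> nat \<Rightarrow> real^'b" where u: "\<And>i. u i \<in> st_vecs Nt"
      "(st_norm Nt v)\<^sup>2 = (\<Sum>i\<in>UNIV. (st_norm Nt (u i))\<^sup>2)"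
      "(st_norm Nt (blk_apply Nt (LM_matrix k c) v))\<^sup>2
         = (\<Sum>i\<in>UNIV. (st_norm Nt (blk_apply Nt (LM_matrix k c) (u i)))\<^sup>2)"
      using decomp[OF v(1)] by metis
    have "y\<^sup>2 = (\<Sum>i\<in>UNIV. (st_norm Nt (blk_apply Nt (LM_matrix k c) (u i)))\<^sup>2)" using u(3) y by simp
    also have "\<dots> \<le> (\<Sum>i\<in>UNIV. (?s * st_norm Nt (u i))\<^sup>2)"
    proof (rule sum_mono)
      fix i
      show "(st_norm Nt (blk_apply Nt (LM_matrix k c) (u i)))\<^sup>2 \<le> (?s * st_norm Nt (u i))\<^sup>2"
        using sigma_max_bound[OF u(1)[of i], of "LM_matrix k c"] st_norm_nonneg
        by (intro power_mono) auto
    qed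
    also have "\<dots> = ?s\<^sup>2 * (st_norm Nt v)\<^sup>2"
      by (simp add: u(2) sum_distrib_left power_mult_distrib)
    also have "\<dots> = ?s\<^sup>2" using v by simp
    finally show "y \<le> ?s" using s0 by (rule power2_le_imp_le)
  qed
  then show ?thesis using eq by simp
qed

lemma sigma_min_indep:
  "Nt \<ge> 1 \<Longrightarrow> sigma_min Nt (LM_matrix k c :: nat \<Rightarrow> nat \<Rightarrow> real^'a^'a)
       = sigma_min Nt (LM_matrix k c :: nat \<Rightarrow> nat \<Rightarrow> real^'b^'b)"
  by (intro order.antisym sigma_min_transfer)

lemma sigma_max_indep:
  "Nt \<ge> 1 \<Longrightarrow> sigma_max Nt (LM_matrix k c :: nat \<Rightarrow> nat \<Rightarrow> real^'a^'a)
       = sigma_max Nt (LM_matrix k c :: nat \<Rightarrow> nat \<Rightarrow> real^'b^'b)"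
  by (intro order.antisym sigma_max_transfer)

lemma Kr_transfer:
  "Nt \<ge> 1 \<Longrightarrow> sigma_min Nt (LM_matrix k a :: nat \<Rightarrow> nat \<Rightarrow> real^'a^'a) - x * sigma_max Nt (LM_matrix k b :: nat \<Rightarrow> nat \<Rightarrow> real^'b^'b)
   = sigma_min Nt (LM_matrix k a :: nat \<Rightarrow> nat \<Rightarrow> real^'c^'c) - x * sigma_max Nt (LM_matrix k b :: nat \<Rightarrow> nat \<Rightarrow> real^'d^'d)"
  using sigma_min_indep[of Nt k a] sigma_max_indep[of Nt k b] by metis

lemma small_transfer:
  "Nt \<ge> 1 \<Longrightarrow> x * sigma_max Nt (LM_matrix k b :: nat \<Rightarrow> nat \<Rightarrow> real^'b^'b) < sigma_min Nt (LM_matrix k a :: nat \<Rightarrow> nat \<Rightarrow> real^'a^'a)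
   \<Longrightarrow> x * sigma_max Nt (LM_matrix k b :: nat \<Rightarrow> nat \<Rightarrow> real^'d^'d) < sigma_min Nt (LM_matrix k a :: nat \<Rightarrow> nat \<Rightarrow> real^'c^'c)"
  using sigma_min_indep[of Nt k a] sigma_max_indep[of Nt k b] by metis


theorem mainTheorem6:
  fixes f :: "real^'s \<Rightarrow> real \<Rightarrow> real^'s"
    and T :: real and Nt :: nat and k :: "nat \<Rightarrow> nat"
    and \<alpha> \<beta> :: "nat \<Rightarrow> nat \<Rightarrow> real" and x0 :: "real^'s"
    and nst :: nat and \<pi> :: "nat \<Rightarrow> nat \<Rightarrow> real^'s"
    and Abar :: "nat \<Rightarrow> real^'s^'z"
    and Lf P :: real and x :: "nat \<Rightarrow> real^'s"
  defines "dt \<equiv> T / real Nt"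
  defines "S \<equiv> trial_space Nt x0 nst \<pi>"
  defines "rbar \<equiv> st_residual Nt f dt k \<alpha> \<beta> x0"
  defines "Kr \<equiv> sigma_min Nt (LM_matrix k \<alpha>) - dt * Lf * sigma_max Nt (LM_matrix k \<beta>)"
  assumes T_pos: "T > 0" and Nt_pos: "Nt \<ge> 1"
    and k_le: "\<forall>n\<in>{1..Nt}. k n \<le> n"
    and alpha0: "\<forall>n\<in>{1..Nt}. \<alpha> n 0 \<noteq> 0"
    and pi_st: "\<forall>i\<in>{1..nst}. \<pi> i \<in> st_vecs Nt"
    and Lf_pos: "Lf > 0"
    and lipschitz: "\<forall>w y t. t \<in> {0..T} \<longrightarrow> norm (f w t - f y t) \<le> Lf * norm (w - y)"
    and dt_small: "dt * Lf * sigma_max Nt (LM_matrix k \<beta>) < sigma_min Nt (LM_matrix k \<alpha>)"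
    and P_pos: "P > 0"
    and weight_bound: "\<forall>w\<in>S. norm (weight_apply Nt Abar (rbar w)) \<ge> P * st_norm Nt (rbar w)"
    and x_st: "x \<in> st_vecs Nt"
    and x_sol: "\<forall>n\<in>{1..Nt}. rbar x n = 0"
  shows "(\<forall>w\<in>S.
            (MAX n\<in>{1..Nt}. norm (x n - w n)) \<le> st_norm Nt (x - w) \<and>
            st_norm Nt (x - w) \<le> 1 / (P * Kr) * norm (weight_apply Nt Abar (rbar w)))
       \<and> (\<forall>xt. xt \<in> S \<and> (\<forall>w\<in>S. norm (weight_apply Nt Abar (rbar xt)) \<le> norm (weight_apply Nt Abar (rbar w)))
            \<longrightarrow> (MAX n\<in>{1..Nt}. norm (x n - xt n)) \<le> st_norm Nt (x - xt) \<and>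
                st_norm Nt (x - xt) \<le> 1 / (P * Kr) * (INF w\<in>S. norm (weight_apply Nt Abar (rbar w))))"
  proof -
  let ?I = "{1..Nt}"
  let ?A = "LM_matrix k \<alpha> :: nat \<Rightarrow> nat \<Rightarrow> real^'s^'s"
  let ?B = "LM_matrix k \<beta> :: nat \<Rightarrow> nat \<Rightarrow> real^'s^'s"
  let ?W = "\<lambda>w. norm (weight_apply Nt Abar (rbar w))"
  have dt_pos: "dt > 0" using T_pos Nt_pos by (simp add: dt_def)
  have Kr_eq: "Kr = sigma_min Nt ?A - dt * Lf * sigma_max Nt ?B"
    unfolding Kr_def by (rule Kr_transfer[OF Nt_pos])
  have ds: "dt * Lf * sigma_max Nt ?B < sigma_min Nt ?A"
    by (rule small_transfer[OF Nt_pos dt_small])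
  have Kr_pos: "Kr > 0" using ds Kr_eq by simp
  have smax: "0 \<le> sigma_max Nt ?B" by (rule sigma_max_nonneg[OF Nt_pos])
  have maxpart: "(MAX n\<in>{1..Nt}. norm (x n - w n)) \<le> st_norm Nt (x - w)" for w
  proof -
    have "(MAX n\<in>{1..Nt}. norm (x n - w n)) \<le> st_norm Nt (x - w) \<longleftrightarrow>
          (\<forall>n\<in>{1..Nt}. norm (x n - w n) \<le> st_norm Nt (x - w))"
      using Nt_pos by (subst Max_le_iff) auto
    moreover have "\<forall>n\<in>{1..Nt}. norm (x n - w n) \<le> st_norm Nt (x - w)"
      using member_le_st_norm[of _ Nt "x - w"] by simp
    ultimately show ?thesis by blast
  qed
  have main: "st_norm Nt (x - w) \<le> 1 / (P * Kr) * ?W w" if wS: "w \<in> S" for w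
  proof -
    have w_st: "w \<in> st_vecs Nt" using wS by (simp add: S_def trial_space_def)
    define v where "v = (\<lambda>n. x n - w n)"
    define d where "d = (\<lambda>m. if m \<in> ?I then f (x m) (real m * dt) - f (w m) (real m * dt) else 0)"
    have v_st: "v \<in> st_vecs Nt" using w_st x_st by (simp add: st_vecs_def v_def)
    have d_st: "d \<in> st_vecs Nt" by (simp add: st_vecs_def d_def)
    have v_eq: "st_norm Nt (x - w) = st_norm Nt v" by (simp add: v_def fun_diff_def)
    have res: "rbar w n = - (blk_apply Nt ?A v n - dt *\<^sub>R blk_apply Nt ?B d n)" if n: "n \<in> ?I" for n
    proof -
      have kn: "k n \<le> n" using k_le n by blast
      have e1: "ext0 x0 x (n - j) - ext0 x0 w (n - j) = (if n - j = 0 then 0 else v (n - j))" for j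
        by (simp add: ext0_def v_def)
      have e2: "f (ext0 x0 x (n - j)) (real (n - j) * dt) - f (ext0 x0 w (n - j)) (real (n - j) * dt)
              = (if n - j = 0 then 0 else d (n - j))" for j
        using n by (auto simp: ext0_def d_def)
      have "rbar x n - rbar w n = LM_residual f dt k \<alpha> \<beta> x0 x n - LM_residual f dt k \<alpha> \<beta> x0 w n"
        using n by (simp add: rbar_def st_residual_def)
      also have "\<dots> = (\<Sum>j\<in>{0..k n}. \<alpha> n j *\<^sub>R (ext0 x0 x (n - j) - ext0 x0 w (n - j)))
          - dt *\<^sub>R (\<Sum>j\<in>{0..k n}. \<beta> n j *\<^sub>R (f (ext0 x0 x (n - j)) (real (n - j) * dt) - f (ext0 x0 w (n - j)) (real (n - j) * dt)))"
        by (simp add: LM_residual_def scaleR_diff_right sum_subtractf algebra_simps)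
      also have "\<dots> = blk_apply Nt ?A v n - dt *\<^sub>R blk_apply Nt ?B d n"
        by (simp only: e1 e2 blk_LM[of n Nt k, OF n kn])
      finally have "- rbar w n = blk_apply Nt ?A v n - dt *\<^sub>R blk_apply Nt ?B d n" using x_sol n by simp
      then show ?thesis by (metis minus_minus)
    qed
    have bnd_d: "st_norm Nt d \<le> Lf * st_norm Nt v"
    proof -
      have "st_norm Nt d \<le> L2_set (\<lambda>n. Lf * norm (v n)) ?I"
        unfolding st_norm_L2
      proof (rule L2_set_mono)
        fix n assume n: "n \<in> ?I"
        have "real n * dt \<le> real Nt * dt" using n dt_pos by (intro mult_right_mono) auto
        also have "\<dots> = T" using Nt_pos by (simp add: dt_def)
        finally have "real n * dt \<in> {0..T}" using dt_pos by simp
        then show "norm (d n) \<le> Lf * norm (v n)" using n lipschitz by (simp add: d_def v_def)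
      qed simp
      also have "\<dots> = Lf * st_norm Nt v"
        unfolding st_norm_L2 using Lf_pos by (simp add: L2_set_right_distrib)
      finally show ?thesis .
    qed
    have a0: "st_norm Nt (rbar w) = st_norm Nt (\<lambda>n. blk_apply Nt ?A v n - dt *\<^sub>R blk_apply Nt ?B d n)"
      by (rule st_norm_cong) (simp add: res norm_minus_commute)
    have a1: "st_norm Nt (blk_apply Nt ?A v) - st_norm Nt (\<lambda>n. dt *\<^sub>R blk_apply Nt ?B d n)
             \<le> st_norm Nt (\<lambda>n. blk_apply Nt ?A v n - dt *\<^sub>R blk_apply Nt ?B d n)"
      by (rule st_norm_diff)
    have a2: "st_norm Nt (\<lambda>n. dt *\<^sub>R blk_apply Nt ?B d n) = dt * st_norm Nt (blk_apply Nt ?B d)"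
      using dt_pos by (simp add: st_norm_scale)
    have a3: "sigma_min Nt ?A * st_norm Nt v \<le> st_norm Nt (blk_apply Nt ?A v)"
      by (rule sigma_min_bound[OF v_st])
    have a4: "st_norm Nt (blk_apply Nt ?B d) \<le> sigma_max Nt ?B * (Lf * st_norm Nt v)"
      using sigma_max_bound[OF d_st, of ?B] mult_left_mono[OF bnd_d smax] by linarith
    have a5: "dt * st_norm Nt (blk_apply Nt ?B d) \<le> dt * (sigma_max Nt ?B * (Lf * st_norm Nt v))"
      using a4 dt_pos by (simp add: mult_left_mono)
    have "Kr * st_norm Nt v \<le> st_norm Nt (rbar w)"
      using a0 a1 a2 a3 a5 by (simp add: Kr_eq algebra_simps)
    then have "P * (Kr * st_norm Nt v) \<le> ?W w"
      using weight_bound wS P_pos by (meson mult_left_mono less_imp_le order_trans)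
    then show ?thesis using P_pos Kr_pos v_eq by (simp add: field_simps)
  qed
  show ?thesis
  proof (intro conjI ballI allI impI)
    fix w assume "w \<in> S"
    then show "(MAX n\<in>{1..Nt}. norm (x n - w n)) \<le> st_norm Nt (x - w)"
      "st_norm Nt (x - w) \<le> 1 / (P * Kr) * ?W w" using maxpart main by auto
  next
    fix xt assume h: "xt \<in> S \<and> (\<forall>w\<in>S. ?W xt \<le> ?W w)"
    show "(MAX n\<in>{1..Nt}. norm (x n - xt n)) \<le> st_norm Nt (x - xt)" by (rule maxpart)
    have "(INF w\<in>S. ?W w) = ?W xt"
      by (rule cInf_eq_minimum) (use h in auto)
    then show "st_norm Nt (x - xt) \<le> 1 / (P * Kr) * (INF w\<in>S. ?W w)"
      using main h by simp
  qed
qed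

end
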